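(* Let $X=\mathbb{C}^n$ and consider $u'(t)=F(u(t))=Lu(t)+N(u(t))$, $u(t_0)=u_0$, satisfying Assumptions 1 and 3 below. Assume that $\operatorname{Re}(u,Lu)\le0$ for all $u\in X$ and that $L\frac{d}{dt}N(u(t))\big|_{t=t_n}$ is uniformly bounded on $X$. Consider the two schemes with constant step $h$: $$\text{(HImExp2J)}\quad U_{n2}=u_n+\tfrac12h(I-\tfrac12hL)^{-1}F(u_n),\quad u_{n+1}=u_n+h(I-\tfrac12hL)^{-1}F(u_n)+2h\varphi_2(hJ_n)\big(N(U_{n2})-N(u_n)\big),$$ $$\text{(HImExp2N)}\quad U_{n2}=u_n+\tfrac12h(I-\tfrac12hL)^{-1}F(u_n),\quad u_{n+1}=u_n+h(I-\tfrac12hL)^{-1}F(u_n)+2h\varphi_2(hN'_n)\big(N(U_{n2})-N(u_n)\big),$$ where $N'_n=N'(u_n)$ and $J_n=L+N'_n$. Then both schemes have order of consistency 3, i.e. the local error $\bar u_{n+1}-u(t_{n+1})$, where $\bar u_{n+1}$ is obtained by one step of the scheme from $u_n=u(t_n)$, is $\mathcal{O}(h^3)$.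
   Context: $\varphi_2(z)=\int_0^1 e^{(1-\theta)z}\theta\,d\theta$. $(\cdot,\cdot)$ is the standard inner product on $\mathbb{C}^n$. Assumption 1: $L$ is the generator of a strongly continuous semigroup $e^{tL}$ on $X$. Assumption 3: the problem possesses a solution that is three times differentiable with uniformly bounded derivatives in $X$, and $N:X\to X$ is twice continuously Fréchet differentiable in a strip along the exact solution. $\mathcal{O}(h^3)$ denotes a term bounded by $Ch^3$ with $C$ independent of $h$ and $n$. *)

theory Defs
  imports "HOL-Analysis.Analysis"
begin

text \<open>The state space X = C^n is rendered as complex^'n (finite index type 'n).
Linear operators are bounded (real-)linear maps, type blinfun.\<close>

definition op_exp :: "('v \<Rightarrow>\<^sub>L 'v::banach) \<Rightarrow> 'v \<Rightarrow> 'v" where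
  "op_exp A v = (\<Sum>k. (1 / fact k) *\<^sub>R ((blinfun_apply A ^^ k) v))"

definition phi2 :: "((complex^'n) \<Rightarrow>\<^sub>L (complex^'n)) \<Rightarrow> complex^'n \<Rightarrow> complex^'n" where
  "phi2 A v = integral {0..1} (\<lambda>\<theta>::real. \<theta> *\<^sub>R op_exp ((1 - \<theta>) *\<^sub>R A) v)"

definition resolv :: "real \<Rightarrow> ((complex^'n) \<Rightarrow>\<^sub>L (complex^'n)) \<Rightarrow> complex^'n \<Rightarrow> complex^'n" where
  "resolv h L v = (THE w. w - (h/2) *\<^sub>R blinfun_apply L w = v)"

definition himexp2_step ::
  "((complex^'n) \<Rightarrow>\<^sub>L (complex^'n)) \<Rightarrow> (complex^'n \<Rightarrow> complex^'n)
   \<Rightarrow> (complex^'n \<Rightarrow> ((complex^'n) \<Rightarrow>\<^sub>L (complex^'n))) \<Rightarrow> real \<Rightarrow> complex^'n \<Rightarrow> complex^'n" where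
  "himexp2_step L N A h un =
     (let w = resolv h L (blinfun_apply L un + N un);
          U2 = un + (h/2) *\<^sub>R w
      in un + h *\<^sub>R w + (2*h) *\<^sub>R phi2 (h *\<^sub>R A un) (N U2 - N un))"

definition himexp2J_step ::
  "((complex^'n) \<Rightarrow>\<^sub>L (complex^'n)) \<Rightarrow> (complex^'n \<Rightarrow> complex^'n)
   \<Rightarrow> (complex^'n \<Rightarrow> ((complex^'n) \<Rightarrow>\<^sub>L (complex^'n))) \<Rightarrow> real \<Rightarrow> complex^'n \<Rightarrow> complex^'n" where
  "himexp2J_step L N N' h un = himexp2_step L N (\<lambda>v. L + N' v) h un"

definition himexp2N_step ::
  "((complex^'n) \<Rightarrow>\<^sub>L (complex^'n)) \<Rightarrow> (complex^'n \<Rightarrow> complex^'n)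
   \<Rightarrow> (complex^'n \<Rightarrow> ((complex^'n) \<Rightarrow>\<^sub>L (complex^'n))) \<Rightarrow> real \<Rightarrow> complex^'n \<Rightarrow> complex^'n" where
  "himexp2N_step L N N' h un = himexp2_step L N N' h un"

end

theory Submission
  imports Defs
begin


lemma mvt_vec:
  fixes f :: "real \<Rightarrow> 'a::real_normed_vector"
  assumes ab: "a \<le> b"
    and d: "\<And>x. x\<in>{a..b} \<Longrightarrow> (f has_vector_derivative f' x) (at x within {a..b})"
    and B: "\<And>x. x\<in>{a..b} \<Longrightarrow> norm (f' x) \<le> B"
  shows "norm (f b - f a) \<le> B * (b - a)"
proof -
  have "norm (f b - f a) \<le> B * norm (b - a)"
    apply (rule differentiable_bound[of "{a..b}" f "\<lambda>x h. h *\<^sub>R f' x" B b a])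
    using d ab B by (auto simp: has_vector_derivative_def onorm_scaleR_left[OF bounded_linear_ident] onorm_id)
  then show ?thesis using ab by simp
qed

lemma pow_scaleR:
  fixes C :: "'a::real_normed_vector \<Rightarrow>\<^sub>L 'a"
  shows "(blinfun_apply (s *\<^sub>R C) ^^ k) v = s ^ k *\<^sub>R ((blinfun_apply C ^^ k) v)"
  by (induction k) (auto simp: blinfun.scaleR_right blinfun.scaleR_left)

lemma pow_norm:
  fixes C :: "'a::real_normed_vector \<Rightarrow>\<^sub>L 'a"
  shows "norm ((blinfun_apply C ^^ k) v) \<le> norm C ^ k * norm v"
proof (induction k)
  case (Suc k)
  have "norm ((blinfun_apply C ^^ Suc k) v) \<le> norm C * norm ((blinfun_apply C ^^ k) v)"
    by (simp add: norm_blinfun)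
  also have "\<dots> \<le> norm C * (norm C ^ k * norm v)"
    by (rule mult_left_mono[OF Suc]) simp
  finally show ?case by (simp add: algebra_simps)
qed simp

lemma exp_summ: "summable (\<lambda>k. x ^ k / fact k :: real)"
  using summable_exp_generic[of x] by (simp add: field_simps)

lemma exp_sums: "(\<lambda>k. x ^ k / fact k :: real) sums exp x"
  using exp_converges[of x] by (simp add: field_simps)

lemma op_exp_summable:
  fixes C :: "'a::banach \<Rightarrow>\<^sub>L 'a"
  shows "summable (\<lambda>k. (1 / fact k) *\<^sub>R ((blinfun_apply C ^^ k) v))"
proof (rule summable_norm_cancel, rule summable_comparison_test[OF _ summable_mult2[OF exp_summ[of "norm C"], of "norm v"]])
  show "\<exists>N. \<forall>n\<ge>N. norm (norm ((1 / fact n) *\<^sub>R (blinfun_apply C ^^ n) v)) \<le> norm C ^ n / fact n * norm v"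
    using pow_norm[where C=C and v=v] by (auto simp: divide_simps)
qed

lemma op_exp_bound:
  fixes C :: "'a::banach \<Rightarrow>\<^sub>L 'a"
  shows "norm (op_exp C v - v) \<le> norm C * exp (norm C) * norm v"
proof -
  let ?f = "\<lambda>k. (1 / fact k) *\<^sub>R ((blinfun_apply C ^^ k) v)"
  have s: "summable ?f" by (rule op_exp_summable)
  have "op_exp C v = ?f 0 + (\<Sum>k. ?f (Suc k))"
    unfolding op_exp_def using suminf_split_head[OF s] by simp
  then have e: "op_exp C v - v = (\<Sum>k. ?f (Suc k))" by simp
  have bnd: "norm (?f (Suc k)) \<le> norm C * (norm C ^ k / fact k) * norm v" for k
  proof -
    have "norm (?f (Suc k)) \<le> norm C ^ Suc k / fact (Suc k) * norm v"
      using pow_norm[where C=C and v=v and k="Suc k"] by (simp add: divide_simps)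
    also have "\<dots> \<le> norm C * (norm C ^ k / fact k) * norm v"
    proof (intro mult_right_mono)
      have "norm C * norm C ^ k * 1 \<le> norm C * norm C ^ k * (1 + real k)"
        by (intro mult_left_mono) auto
      then show "norm C ^ Suc k / fact (Suc k) \<le> norm C * (norm C ^ k / fact k)"
        by (simp add: divide_simps)
    qed simp
    finally show ?thesis .
  qed
  have sm: "summable (\<lambda>k. norm C * (norm C ^ k / fact k) * norm v)"
    by (intro summable_mult2 summable_mult exp_summ)
  have "norm (\<Sum>k. ?f (Suc k)) \<le> (\<Sum>k. norm C * (norm C ^ k / fact k) * norm v)"
    by (rule norm_suminf_le[OF bnd sm])
  also have "\<dots> = norm C * exp (norm C) * norm v"
    using sums_unique[OF sums_mult2[OF sums_mult[OF exp_sums[of "norm C"], of "norm C"], of "norm v"]] by simp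
  finally show ?thesis using e by simp
qed

lemma op_exp_cont:
  fixes C :: "'a::banach \<Rightarrow>\<^sub>L 'a"
  shows "continuous_on {0..1} (\<lambda>s::real. op_exp (s *\<^sub>R C) v)"
proof -
  let ?t = "\<lambda>i (s::real). (1 / fact i) *\<^sub>R (s ^ i *\<^sub>R ((blinfun_apply C ^^ i) v))"
  have ul: "uniform_limit {0..1} (\<lambda>n s. \<Sum>i<n. ?t i s) (\<lambda>s. suminf (\<lambda>i. ?t i s)) sequentially"
  proof (rule Weierstrass_m_test[where M="\<lambda>i. norm C ^ i / fact i * norm v"])
    fix i and s :: real assume s: "s \<in> {0..1}"
    have "norm (?t i s) = \<bar>s\<bar> ^ i * norm ((blinfun_apply C ^^ i) v) / fact i"
      by (simp add: power_abs)
    also have "\<dots> \<le> 1 * (norm C ^ i * norm v) / fact i"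
      by (intro divide_right_mono mult_mono pow_norm) (use s in \<open>auto intro: power_le_one\<close>)
    finally show "norm (?t i s) \<le> norm C ^ i / fact i * norm v" by simp
  next
    show "summable (\<lambda>i. norm C ^ i / fact i * norm v)"
      by (intro summable_mult2 exp_summ)
  qed
  have "continuous_on {0..1} (\<lambda>s. suminf (\<lambda>i. ?t i s))"
    apply (rule uniform_limit_theorem[OF _ ul])
     apply (intro always_eventually allI continuous_intros)
    apply simp
    done
  then show ?thesis
    by (simp add: op_exp_def pow_scaleR)
qed

lemma phi2_bound:
  fixes B :: "(complex^'n) \<Rightarrow>\<^sub>L (complex^'n)"
  shows "norm (phi2 B v - (1/2) *\<^sub>R v) \<le> norm B * exp (norm B) * norm v"
proof -
  let ?f = "\<lambda>\<theta>::real. \<theta> *\<^sub>R op_exp ((1 - \<theta>) *\<^sub>R B) v"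
  have c1: "continuous_on {0..1} (\<lambda>\<theta>::real. op_exp ((1 - \<theta>) *\<^sub>R B) v)"
    by (rule continuous_on_compose2[OF op_exp_cont[of B v], of _ "\<lambda>\<theta>. 1 - \<theta>"])
       (auto intro!: continuous_intros)
  have "continuous_on {0..1} ?f"
    by (intro continuous_intros c1)
  then have i1: "(?f has_integral phi2 B v) {0..1}"
    unfolding phi2_def by (rule integrable_integral[OF integrable_continuous_real])
  have d: "((\<lambda>x::real. x*x/2) has_vector_derivative x) (at x within {0..1})" for x
  proof -
    have "((\<lambda>x::real. x*x/2) has_real_derivative (1 * x + 1 * x)/2) (at x within {0..1})"
      by (intro DERIV_cdivide DERIV_mult DERIV_ident)
    then have "((\<lambda>x::real. x*x/2) has_real_derivative x) (at x within {0..1})" by simp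
    then show ?thesis unfolding has_real_derivative_iff_has_vector_derivative .
  qed
  have "((\<lambda>x::real. x) has_integral ((1::real)*1/2 - 0*0/2)) {0..1}"
    by (rule fundamental_theorem_of_calculus) (auto intro: d)
  then have i2: "((\<lambda>\<theta>::real. \<theta> *\<^sub>R v) has_integral ((1/2) *\<^sub>R v)) {0..1}"
  proof -
    from \<open>((\<lambda>x::real. x) has_integral ((1::real)*1/2 - 0*0/2)) {0..1}\<close>
    have "((\<lambda>x::real. x) has_integral (1/2)) {0..1}" by simp
    from has_integral_scaleR_left[OF this, of v] show ?thesis .
  qed
  have i3: "((\<lambda>\<theta>. ?f \<theta> - \<theta> *\<^sub>R v) has_integral (phi2 B v - (1/2) *\<^sub>R v)) {0..1}"
    by (rule has_integral_diff[OF i1 i2])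
  have pb: "norm (?f \<theta> - \<theta> *\<^sub>R v) \<le> norm B * exp (norm B) * norm v" if th: "\<theta> \<in> {0..1}" for \<theta> :: real
  proof -
    have a1: "\<bar>1 - \<theta>\<bar> \<le> 1" using th by auto
    have nb: "norm ((1 - \<theta>) *\<^sub>R B) \<le> norm B"
      using mult_left_le_one_le[OF norm_ge_zero abs_ge_zero a1, of B] by simp
    have eq: "?f \<theta> - \<theta> *\<^sub>R v = \<theta> *\<^sub>R (op_exp ((1 - \<theta>) *\<^sub>R B) v - v)"
      by (simp add: scaleR_diff_right)
    have "norm (?f \<theta> - \<theta> *\<^sub>R v) = \<theta> * norm (op_exp ((1 - \<theta>) *\<^sub>R B) v - v)"
      unfolding eq using th by simp
    also have "\<dots> \<le> 1 * (norm ((1 - \<theta>) *\<^sub>R B) * exp (norm ((1 - \<theta>) *\<^sub>R B)) * norm v)"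
      using th by (intro mult_mono[OF _ op_exp_bound]) auto
    also have "\<dots> \<le> norm B * exp (norm B) * norm v"
      using nb by (simp add: mult_mono)
    finally show ?thesis .
  qed
  show ?thesis
    using has_integral_bound_real[OF _ _ i3, where S="{}"] pb by simp
qed



lemma resolv_eq:
  fixes L :: "(complex^'n) \<Rightarrow>\<^sub>L (complex^'n)"
  assumes h: "0 \<le> h" "h * norm L \<le> 1"
  shows "resolv h L v - (h/2) *\<^sub>R blinfun_apply L (resolv h L v) = v"
    and "norm (resolv h L v) \<le> 2 * norm v"
proof -
  let ?f = "\<lambda>w. w - (h/2) *\<^sub>R blinfun_apply L w"
  have lin: "linear ?f"
    unfolding linear_iff by (simp add: blinfun.add_right blinfun.scaleR_right algebra_simps)
  have small: "norm ((h/2) *\<^sub>R blinfun_apply L z) \<le> norm z / 2" for z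
  proof -
    have "norm ((h/2) *\<^sub>R blinfun_apply L z) \<le> (h/2) * (norm L * norm z)"
      using h by (simp add: norm_blinfun mult_left_mono)
    also have "\<dots> = (h * norm L) * norm z / 2" by simp
    also have "\<dots> \<le> 1 * norm z / 2"
      using h by (intro divide_right_mono mult_right_mono) auto
    finally show ?thesis by simp
  qed
  have inj: "inj ?f"
  proof (rule injI)
    fix x y assume e: "?f x = ?f y"
    let ?z = "x - y"
    have "?z = (h/2) *\<^sub>R blinfun_apply L ?z"
      using e by (simp add: blinfun.diff_right algebra_simps)
    then have "norm ?z = norm ((h/2) *\<^sub>R blinfun_apply L ?z)" by (rule arg_cong)
    then have "norm ?z \<le> norm ?z / 2" using small[of ?z] by linarith
    then show "x = y" by simp
  qed
  have "surj ?f"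
    using lin inj linear_inj_imp_surj by blast
  from surjD[OF this, of v] obtain w where "v = ?f w" by blast
  then have w: "?f w = v" by simp
  have "resolv h L v = w"
    unfolding resolv_def
  proof (rule the_equality)
    show "?f w = v" by fact
    fix w' assume "?f w' = v" then show "w' = w" using w inj by (auto dest: injD)
  qed
  then show e: "resolv h L v - (h/2) *\<^sub>R blinfun_apply L (resolv h L v) = v" using w by simp
  have "norm (resolv h L v) \<le> norm v + norm ((h/2) *\<^sub>R blinfun_apply L (resolv h L v))"
  proof -
    have "resolv h L v = v + (h/2) *\<^sub>R blinfun_apply L (resolv h L v)"
      using e by (simp add: algebra_simps)
    then show ?thesis using norm_triangle_ineq[of v "(h/2) *\<^sub>R blinfun_apply L (resolv h L v)"] by simp
  qed
  then show "norm (resolv h L v) \<le> 2 * norm v" using small[of "resolv h L v"] by simp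
qed

lemma N_lip:
  fixes N :: "'a::real_normed_vector \<Rightarrow> 'b::real_normed_vector"
  assumes "convex S" "\<And>y. y \<in> S \<Longrightarrow> (N has_derivative blinfun_apply (N' y)) (at y)"
    "\<And>y. y \<in> S \<Longrightarrow> norm (N' y) \<le> M" "x \<in> S" "y \<in> S"
  shows "norm (N y - N x) \<le> M * norm (y - x)"
  using differentiable_bound[OF assms(1) _ _ assms(5) assms(4), where f'="\<lambda>y. blinfun_apply (N' y)" and B=M] assms(2,3)
  by (auto intro: has_derivative_at_withinI simp: norm_blinfun.rep_eq[symmetric])

lemma N_taylor:
  fixes N :: "'a::real_normed_vector \<Rightarrow> 'b::real_normed_vector"
  assumes S: "convex S" and dN: "\<And>y. y \<in> S \<Longrightarrow> (N has_derivative blinfun_apply (N' y)) (at y)"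
    and dN': "\<And>y. y \<in> S \<Longrightarrow> (N' has_derivative blinfun_apply (N'' y)) (at y)"
    and b: "\<And>y. y \<in> S \<Longrightarrow> norm (N'' y) \<le> M" and x: "x \<in> S" and y: "y \<in> S"
  shows "norm (N y - N x - blinfun_apply (N' x) (y - x)) \<le> M * norm (y - x)^2"
proof -
  let ?S = "S \<inter> cball x (norm (y - x))"
  have cS: "convex ?S" using S by (simp add: convex_Int)
  have xS: "x \<in> ?S" using x by simp
  have yS: "y \<in> ?S" using y by (simp add: dist_norm norm_minus_commute)
  have lip: "norm (N' z - N' x) \<le> M * norm (z - x)" if "z \<in> ?S" for z
    by (rule N_lip[OF cS _ _ xS that, of N' N'' M]) (use dN' b in auto)
  have "norm (N y - N x - blinfun_apply (N' x) (y - x)) \<le> norm (y - x) * (M * norm (y - x))"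
  proof (rule differentiable_bound_linearization[where S="?S" and f'="\<lambda>z. blinfun_apply (N' z)"])
    fix t :: real assume t: "t \<in> {0..1}"
    have "x + t *\<^sub>R (y - x) \<in> ?S"
      using convexD_alt[OF cS xS yS, of t] t by (simp add: algebra_simps)
    then show "x + t *\<^sub>R (y - x) \<in> ?S" .
  next
    fix z assume z: "z \<in> ?S"
    then show "(N has_derivative blinfun_apply (N' z)) (at z within ?S)"
      using dN by (auto intro: has_derivative_at_withinI)
    have "onorm (blinfun_apply (N' z) - blinfun_apply (N' x)) = norm (N' z - N' x)"
      by (simp add: norm_blinfun.rep_eq minus_blinfun.rep_eq fun_diff_def)
    also have "\<dots> \<le> M * norm (z - x)" by (rule lip[OF z])
    also have "\<dots> \<le> M * norm (y - x)"
      using z b[OF x] by (intro mult_left_mono) (auto simp: dist_norm norm_minus_commute intro: order_trans[OF norm_ge_zero])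
    finally show "onorm (blinfun_apply (N' z) - blinfun_apply (N' x)) \<le> M * norm (y - x)" .
  qed (rule xS)
  then show ?thesis by (simp add: power2_eq_square algebra_simps)
qed



lemma taylor_u:
  fixes u u1 u2 u3 :: "real \<Rightarrow> 'a::real_normed_vector"
  assumes d1: "\<And>t. t \<in> {t0..T} \<Longrightarrow> (u has_vector_derivative u1 t) (at t within {t0..T})"
    and d2: "\<And>t. t \<in> {t0..T} \<Longrightarrow> (u1 has_vector_derivative u2 t) (at t within {t0..T})"
    and d3: "\<And>t. t \<in> {t0..T} \<Longrightarrow> (u2 has_vector_derivative u3 t) (at t within {t0..T})"
    and B: "\<And>t. t \<in> {t0..T} \<Longrightarrow> norm (u3 t) \<le> B"
    and t: "t0 \<le> t" "t + h \<le> T" "0 \<le> h"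
  shows "norm (u (t + h) - u t - h *\<^sub>R u1 t - (h^2/2) *\<^sub>R u2 t) \<le> B * h^3"
proof -
  have sub: "{a..b} \<subseteq> {t0..T}" if "t \<le> a" "b \<le> t + h" for a b using that t by auto
  have B0: "0 \<le> B" using B[of t0] t by (auto intro: order_trans[OF norm_ge_zero])
  have s1: "norm (u2 s - u2 t) \<le> B * h" if s: "s \<in> {t..t+h}" for s
  proof -
    have "norm (u2 s - u2 t) \<le> B * (s - t)"
    proof (rule mvt_vec)
      fix x assume x: "x \<in> {t..s}"
      show "(u2 has_vector_derivative u3 x) (at x within {t..s})"
        using x s t by (intro has_vector_derivative_within_subset[OF d3 sub]) auto
      show "norm (u3 x) \<le> B" using x s t by (intro B) auto
    qed (use s in auto)
    also have "\<dots> \<le> B * h" using s B0 by (intro mult_left_mono) auto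
    finally show ?thesis .
  qed
  have s2: "norm (u1 s - u1 t - (s - t) *\<^sub>R u2 t) \<le> (B * h) * h" if s: "s \<in> {t..t+h}" for s
  proof -
    have "norm ((u1 s - (s - t) *\<^sub>R u2 t) - (u1 t - (t - t) *\<^sub>R u2 t)) \<le> (B * h) * (s - t)"
    proof (rule mvt_vec[where f'="\<lambda>x. u2 x - u2 t"])
      fix x assume x: "x \<in> {t..s}"
      have "((\<lambda>y. y - t) has_real_derivative 1) (at x within {t..s})"
        using DERIV_diff[OF DERIV_ident DERIV_const[of t]] by simp
      from has_vector_derivative_scaleR[OF this has_vector_derivative_const[of "u2 t"]]
      have dd: "((\<lambda>y. (y - t) *\<^sub>R u2 t) has_vector_derivative u2 t) (at x within {t..s})" by simp
      have d1': "(u1 has_vector_derivative u2 x) (at x within {t..s})"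
        using x s t by (intro has_vector_derivative_within_subset[OF d2 sub]) auto
      show "((\<lambda>y. u1 y - (y - t) *\<^sub>R u2 t) has_vector_derivative u2 x - u2 t) (at x within {t..s})"
        by (rule has_vector_derivative_diff[OF d1' dd])
      show "norm (u2 x - u2 t) \<le> B * h" using x s by (intro s1) auto
    qed (use s in auto)
    also have "\<dots> \<le> (B * h) * h" using s B0 t by (intro mult_left_mono) auto
    finally show ?thesis by (simp add: algebra_simps)
  qed
  have "norm ((u (t+h) - (t + h - t) *\<^sub>R u1 t - ((t + h - t)^2/2) *\<^sub>R u2 t) - (u t - (t - t) *\<^sub>R u1 t - ((t - t)^2/2) *\<^sub>R u2 t))
     \<le> ((B * h) * h) * (t + h - t)"
  proof (rule mvt_vec[where f'="\<lambda>x. u1 x - u1 t - (x - t) *\<^sub>R u2 t"])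
    fix x assume x: "x \<in> {t..t+h}"
    have dl: "((\<lambda>y. y - t) has_real_derivative 1) (at x within {t..t+h})"
      using DERIV_diff[OF DERIV_ident DERIV_const[of t]] by simp
    from has_vector_derivative_scaleR[OF this has_vector_derivative_const[of "u1 t"]]
    have dd: "((\<lambda>y. (y - t) *\<^sub>R u1 t) has_vector_derivative u1 t) (at x within {t..t+h})" by simp
    have "((\<lambda>y. (y - t)^2/2) has_real_derivative (x - t)) (at x within {t..t+h})"
    proof -
      have "((\<lambda>y. (y - t) * (y - t) / 2) has_real_derivative (1 * (x - t) + 1 * (x - t)) / 2) (at x within {t..t+h})"
        by (intro DERIV_cdivide DERIV_mult dl)
      moreover have "(1 * (x - t) + 1 * (x - t)) / 2 = x - t" by simp
      ultimately show ?thesis by (simp only: power2_eq_square)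
    qed
    from has_vector_derivative_scaleR[OF this has_vector_derivative_const[of "u2 t"]]
    have dd2: "((\<lambda>y. ((y - t)^2/2) *\<^sub>R u2 t) has_vector_derivative (x - t) *\<^sub>R u2 t) (at x within {t..t+h})" by simp
    have d0: "(u has_vector_derivative u1 x) (at x within {t..t+h})"
      using x t by (intro has_vector_derivative_within_subset[OF d1 sub]) auto
    show "((\<lambda>y. u y - (y - t) *\<^sub>R u1 t - ((y - t)^2/2) *\<^sub>R u2 t) has_vector_derivative
           u1 x - u1 t - (x - t) *\<^sub>R u2 t) (at x within {t..t+h})"
      by (rule has_vector_derivative_diff[OF has_vector_derivative_diff[OF d0 dd] dd2])
    show "norm (u1 x - u1 t - (x - t) *\<^sub>R u2 t) \<le> B * h * h" using x by (intro s2) auto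
  qed (use t in auto)
  moreover have "u (t + h) - h *\<^sub>R u1 t - (h\<^sup>2 / 2) *\<^sub>R u2 t - u t = u (t + h) - u t - h *\<^sub>R u1 t - (h\<^sup>2 / 2) *\<^sub>R u2 t"
    by (simp add: algebra_simps)
  ultimately show ?thesis by (simp add: power3_eq_cube mult.assoc)
qed



lemma ident:
  fixes L N1 :: "'a::real_normed_vector \<Rightarrow>\<^sub>L 'a"
  shows "(un + h *\<^sub>R w + (2*h) *\<^sub>R P) - ut1 =
    (h^2/2) *\<^sub>R blinfun_apply L ((h/2) *\<^sub>R blinfun_apply L w) + (h^2/2) *\<^sub>R blinfun_apply N1 ((h/2) *\<^sub>R blinfun_apply L w)
    + h *\<^sub>R (D - blinfun_apply N1 ((h/2) *\<^sub>R w)) + (2*h) *\<^sub>R (P - (1/2) *\<^sub>R D)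
    - (ut1 - un - h *\<^sub>R (w - (h/2) *\<^sub>R blinfun_apply L w)
        - (h^2/2) *\<^sub>R (blinfun_apply L (w - (h/2) *\<^sub>R blinfun_apply L w) + blinfun_apply N1 (w - (h/2) *\<^sub>R blinfun_apply L w)))"
  by (simp add: blinfun.diff_right blinfun.scaleR_right blinfun.add_right algebra_simps power2_eq_square)

theorem lemma4p1:
  fixes L :: "(complex^'n) \<Rightarrow>\<^sub>L (complex^'n)"
    and N :: "complex^'n \<Rightarrow> complex^'n"
    and N' :: "complex^'n \<Rightarrow> ((complex^'n) \<Rightarrow>\<^sub>L (complex^'n))"
    and N'' :: "complex^'n \<Rightarrow> ((complex^'n) \<Rightarrow>\<^sub>L ((complex^'n) \<Rightarrow>\<^sub>L (complex^'n)))"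
    and u u1 u2 u3 :: "real \<Rightarrow> complex^'n"
    and t0 T :: real and u0 :: "complex^'n" and \<delta> :: real
  assumes T: "t0 < T"
    and L_complex_linear: "\<And>(c::complex) v. blinfun_apply L (c *s v) = c *s blinfun_apply L v"
    and dissipative: "\<And>v. v \<bullet> blinfun_apply L v \<le> 0"
    \<comment> \<open>the exact solution, three times differentiable with uniformly bounded derivatives\<close>
    and init: "u t0 = u0"
    and d1: "\<And>t. t \<in> {t0..T} \<Longrightarrow> (u has_vector_derivative u1 t) (at t within {t0..T})"
    and d2: "\<And>t. t \<in> {t0..T} \<Longrightarrow> (u1 has_vector_derivative u2 t) (at t within {t0..T})"
    and d3: "\<And>t. t \<in> {t0..T} \<Longrightarrow> (u2 has_vector_derivative u3 t) (at t within {t0..T})"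
    and bnd: "\<exists>B. \<forall>t\<in>{t0..T}. norm (u1 t) \<le> B \<and> norm (u2 t) \<le> B \<and> norm (u3 t) \<le> B"
    and ode: "\<And>t. t \<in> {t0..T} \<Longrightarrow> u1 t = blinfun_apply L (u t) + N (u t)"
    \<comment> \<open>N twice continuously Frechet differentiable in a strip along the exact solution\<close>
    and \<delta>: "\<delta> > 0"
    and DN: "\<And>v. (\<exists>t\<in>{t0..T}. dist v (u t) < \<delta>) \<Longrightarrow> (N has_derivative blinfun_apply (N' v)) (at v)"
    and DN': "\<And>v. (\<exists>t\<in>{t0..T}. dist v (u t) < \<delta>) \<Longrightarrow> (N' has_derivative blinfun_apply (N'' v)) (at v)"
    and contN'': "continuous_on {v. \<exists>t\<in>{t0..T}. dist v (u t) < \<delta>} N''"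
    \<comment> \<open>L (d/dt N(u(t))) uniformly bounded\<close>
    and LdN: "\<exists>M. \<forall>t\<in>{t0..T}. norm (blinfun_apply L (blinfun_apply (N' (u t)) (u1 t))) \<le> M"
  shows "\<exists>C h0. h0 > 0 \<and> (\<forall>h (n::nat). 0 < h \<longrightarrow> h \<le> h0 \<longrightarrow> t0 + real (Suc n) * h \<le> T \<longrightarrow>
            norm (himexp2J_step L N N' h (u (t0 + real n * h)) - u (t0 + real (Suc n) * h)) \<le> C * h ^ 3 \<and>
            norm (himexp2N_step L N N' h (u (t0 + real n * h)) - u (t0 + real (Suc n) * h)) \<le> C * h ^ 3)"
proof -
  obtain B where B: "\<forall>t\<in>{t0..T}. norm (u1 t) \<le> B \<and> norm (u2 t) \<le> B \<and> norm (u3 t) \<le> B"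
    using bnd by blast
  have t0I: "t0 \<in> {t0..T}" using T by auto
  have B0: "0 \<le> B" using B t0I by (meson norm_ge_zero order_trans)
  define K where "K = (\<lambda>p. u (fst p) + snd p) ` ({t0..T} \<times> cball (0::complex^'n) (\<delta>/2))"
  have ucont: "continuous_on {t0..T} u"
    unfolding continuous_on_eq_continuous_within using d1 has_vector_derivative_continuous by blast
  have pcont: "continuous_on ({t0..T} \<times> cball (0::complex^'n) (\<delta>/2)) (\<lambda>p. u (fst p) + snd p)"
  proof (rule continuous_on_add)
    show "continuous_on ({t0..T} \<times> cball (0::complex^'n) (\<delta>/2)) (\<lambda>p. u (fst p))"
      by (rule continuous_on_compose2[OF ucont continuous_on_fst]) auto
  qed (intro continuous_on_snd continuous_on_id)
  have Kc: "compact K" unfolding K_def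
    by (intro compact_continuous_image pcont compact_Times compact_Icc compact_cball)
  have inK: "y \<in> K" if "t \<in> {t0..T}" "norm (y - u t) \<le> \<delta>/2" for t y
    unfolding K_def using that by (intro image_eqI[where x="(t, y - u t)"]) auto
  have Kstrip: "\<exists>t\<in>{t0..T}. dist v (u t) < \<delta>" if "v \<in> K" for v
  proof -
    from that obtain t w where tw: "t \<in> {t0..T}" "norm w \<le> \<delta>/2" "v = u t + w"
      unfolding K_def by auto
    then have "dist v (u t) < \<delta>" using \<delta> by (simp add: dist_norm)
    then show ?thesis using tw by blast
  qed
  have N'cont: "continuous_on K N'"
    by (rule continuous_at_imp_continuous_on) (use DN' Kstrip has_derivative_continuous in blast)
  obtain M1 where M1: "\<forall>v\<in>K. norm (N' v) \<le> M1"
    using compact_imp_bounded[OF compact_continuous_image[OF N'cont Kc]] by (auto simp: bounded_iff)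
  have N''cont: "continuous_on K N''"
    by (rule continuous_on_subset[OF contN'']) (use Kstrip in auto)
  obtain M2 where M2: "\<forall>v\<in>K. norm (N'' v) \<le> M2"
    using compact_imp_bounded[OF compact_continuous_image[OF N''cont Kc]] by (auto simp: bounded_iff)
  have u0K: "u t0 \<in> K" using inK[OF t0I, of "u t0"] \<delta> by simp
  have M10: "0 \<le> M1" using M1 u0K by (meson norm_ge_zero order_trans)
  have M20: "0 \<le> M2" using M2 u0K by (meson norm_ge_zero order_trans)
  define KL where "KL = norm L"
  have KL0: "0 \<le> KL" unfolding KL_def by simp
  define KA where "KA = KL + M1"
  have KA0: "0 \<le> KA" unfolding KA_def using KL0 M10 by simp
  define C where "C = KL^2*B/2 + M1*KL*B/2 + M2*B^2 + 2*KA*exp KA*M1*B + B"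
  define h0 where "h0 = min 1 (min (1/(KL+1)) (\<delta>/(2*(B+1))))"
  have h00: "h0 > 0" unfolding h0_def using KL0 B0 \<delta> by auto
  have key: "norm (himexp2_step L N A h (u t) - u (t+h)) \<le> C * h^3"
    if A: "norm (A (u t)) \<le> KA" and h: "0 < h" "h \<le> h0" and t: "t0 \<le> t" "t + h \<le> T" for A h t
  proof -
    have tI: "t \<in> {t0..T}" using t h by auto
    define un where "un = u t"
    define F where "F = u1 t"
    have ode': "blinfun_apply L un + N un = F" unfolding un_def F_def using ode[OF tI] by simp
    have nF: "norm F \<le> B" unfolding F_def using B tI by auto
    have h1: "h \<le> 1" using h unfolding h0_def by auto
    have "h \<le> 1/(KL+1)" using h unfolding h0_def by auto
    then have "h * (KL+1) \<le> 1" using KL0 by (simp add: field_simps)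
    then have hK: "h * KL \<le> 1" using h by (simp add: algebra_simps)
    have "h \<le> \<delta>/(2*(B+1))" using h unfolding h0_def by auto
    then have "h * (2*(B+1)) \<le> \<delta>" using B0 by (simp add: field_simps)
    then have hB: "h * B \<le> \<delta>/2" using h by (simp add: algebra_simps)
    define w where "w = resolv h L F"
    have Rw: "w - (h/2) *\<^sub>R blinfun_apply L w = F"
      unfolding w_def using resolv_eq(1)[of h L F] h hK unfolding KL_def by simp
    have nw: "norm w \<le> 2 * B"
      unfolding w_def using resolv_eq(2)[of h L F] h hK nF unfolding KL_def by simp
    have wF: "F = w - (h/2) *\<^sub>R blinfun_apply L w" using Rw by simp
    define U2 where "U2 = un + (h/2) *\<^sub>R w"
    have nd: "norm (U2 - un) \<le> h * B"
    proof -
      have "norm (U2 - un) = h/2 * norm w" unfolding U2_def using h by simp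
      also have "\<dots> \<le> h/2 * (2 * B)" using nw h by (intro mult_left_mono) auto
      finally show ?thesis by simp
    qed
    define S where "S = cball un (\<delta>/2)"
    have cS: "convex S" unfolding S_def by simp
    have SK: "y \<in> K" if "y \<in> S" for y
      using inK[OF tI, of y] that unfolding S_def un_def by (simp add: dist_norm norm_minus_commute)
    have unS: "un \<in> S" unfolding S_def using \<delta> by simp
    have U2S: "U2 \<in> S" unfolding S_def using nd hB by (simp add: dist_norm norm_minus_commute)
    have dNS: "(N has_derivative blinfun_apply (N' y)) (at y)" if "y \<in> S" for y
      using DN Kstrip SK that by blast
    have dN'S: "(N' has_derivative blinfun_apply (N'' y)) (at y)" if "y \<in> S" for y
      using DN' Kstrip SK that by blast
    define D where "D = N U2 - N un"
    have N'un: "norm (N' un) \<le> M1" using M1 SK[OF unS] by blast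
    have E1: "norm (D - blinfun_apply (N' un) ((h/2) *\<^sub>R w)) \<le> M2 * (h*B)^2"
    proof -
      have "norm (D - blinfun_apply (N' un) ((h/2) *\<^sub>R w)) \<le> M2 * norm (U2 - un)^2"
        unfolding D_def using N_taylor[OF cS dNS dN'S _ unS U2S, of M2] M2 SK
        by (simp add: U2_def)
      also have "\<dots> \<le> M2 * (h*B)^2"
        using nd M20 by (intro mult_left_mono power_mono) auto
      finally show ?thesis .
    qed
    have nD: "norm D \<le> M1 * (h*B)"
    proof -
      have "norm D \<le> M1 * norm (U2 - un)"
        unfolding D_def using N_lip[OF cS dNS _ unS U2S, of M1] M1 SK by blast
      also have "\<dots> \<le> M1 * (h*B)" using nd M10 by (intro mult_left_mono) auto
      finally show ?thesis .
    qed
    define P where "P = phi2 (h *\<^sub>R A un) D"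
    have nhA: "norm (h *\<^sub>R A un) \<le> h * KA" using A h unfolding un_def by (simp add: mult_left_mono)
    have nhA1: "norm (h *\<^sub>R A un) \<le> KA" using nhA h1 KA0 by (meson mult_left_le_one_le order_trans less_imp_le h(1))
    have E2: "norm (P - (1/2) *\<^sub>R D) \<le> (h * KA) * exp KA * (M1 * (h*B))"
    proof -
      have "norm (P - (1/2) *\<^sub>R D) \<le> norm (h *\<^sub>R A un) * exp (norm (h *\<^sub>R A un)) * norm D"
        unfolding P_def by (rule phi2_bound)
      also have "\<dots> \<le> (h * KA) * exp KA * (M1 * (h*B))"
        using nhA nhA1 nD h KA0 by (intro mult_mono) auto
      finally show ?thesis .
    qed
    have u2id: "u2 t = blinfun_apply L F + blinfun_apply (N' un) F"
    proof -
      have dA: "(u1 has_vector_derivative u2 t) (at t within {t0..T})" by (rule d2[OF tI])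
      have du: "(u has_derivative (\<lambda>s. s *\<^sub>R u1 t)) (at t within {t0..T})"
        using d1[OF tI] by (simp add: has_vector_derivative_def)
      have dL: "((\<lambda>s. blinfun_apply L (u s)) has_derivative (\<lambda>s. blinfun_apply L (s *\<^sub>R u1 t))) (at t within {t0..T})"
        using diff_chain_within[OF du bounded_linear_imp_has_derivative[OF blinfun.bounded_linear_right[of L]]]
        by (simp add: o_def)
      have dNu: "((\<lambda>s. N (u s)) has_derivative (\<lambda>s. blinfun_apply (N' (u t)) (s *\<^sub>R u1 t))) (at t within {t0..T})"
      proof -
        have "(N has_derivative blinfun_apply (N' (u t))) (at (u t))"
          using DN[of "u t"] tI \<delta> by (metis dist_self)
        then have "(N has_derivative blinfun_apply (N' (u t))) (at (u t) within u ` {t0..T})"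
          by (rule has_derivative_at_withinI)
        from diff_chain_within[OF du this] show ?thesis by (simp add: o_def)
      qed
      have dd: "((\<lambda>s. blinfun_apply L (u s) + N (u s)) has_vector_derivative
             (blinfun_apply L (u1 t) + blinfun_apply (N' (u t)) (u1 t))) (at t within {t0..T})"
        unfolding has_vector_derivative_def
        using has_derivative_add[OF dL dNu] by (simp add: blinfun.scaleR_right scaleR_right_distrib)
      have dU: "(u1 has_vector_derivative
             (blinfun_apply L (u1 t) + blinfun_apply (N' (u t)) (u1 t))) (at t within {t0..T})"
        by (rule has_vector_derivative_transform[OF tI _ dd]) (simp add: ode)
      have "u2 t = blinfun_apply L (u1 t) + blinfun_apply (N' (u t)) (u1 t)"
        by (rule vector_derivative_unique_within_closed_interval[of t0 T t u1]) (use T tI dA dU in \<open>auto simp: box_real\<close>)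
      then show ?thesis using tI unfolding F_def un_def by simp
    qed
    have E3: "norm (u (t + h) - un - h *\<^sub>R F - (h^2/2) *\<^sub>R u2 t) \<le> B * h^3"
      unfolding un_def F_def by (rule taylor_u[OF d1 d2 d3 _ t]) (use B h in auto)
    have step: "himexp2_step L N A h un = un + h *\<^sub>R w + (2*h) *\<^sub>R P"
      unfolding himexp2_step_def Let_def ode' w_def[symmetric] U2_def[symmetric] D_def[symmetric] P_def[symmetric] by simp
    let ?X1 = "(h^2/2) *\<^sub>R blinfun_apply L ((h/2) *\<^sub>R blinfun_apply L w)"
    let ?X2 = "(h^2/2) *\<^sub>R blinfun_apply (N' un) ((h/2) *\<^sub>R blinfun_apply L w)"
    let ?X3 = "h *\<^sub>R (D - blinfun_apply (N' un) ((h/2) *\<^sub>R w))"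
    let ?X4 = "(2*h) *\<^sub>R (P - (1/2) *\<^sub>R D)"
    let ?X5 = "u (t + h) - un - h *\<^sub>R F - (h^2/2) *\<^sub>R u2 t"
    have idt: "himexp2_step L N A h un - u (t+h) = ?X1 + ?X2 + ?X3 + ?X4 - ?X5"
      unfolding step u2id wF by (rule ident)
    have nLw: "norm ((h/2) *\<^sub>R blinfun_apply L w) \<le> h/2 * (KL * (2*B))"
    proof -
      have "norm ((h/2) *\<^sub>R blinfun_apply L w) = h/2 * norm (blinfun_apply L w)" using h by simp
      also have "\<dots> \<le> h/2 * (KL * norm w)" unfolding KL_def using h by (intro mult_left_mono norm_blinfun) auto
      also have "\<dots> \<le> h/2 * (KL * (2*B))" using h KL0 nw by (intro mult_left_mono) auto
      finally show ?thesis .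
    qed
    have b1: "norm ?X1 \<le> (KL^2*B/2) * h^3"
    proof -
      have "norm ?X1 = h^2/2 * norm (blinfun_apply L ((h/2) *\<^sub>R blinfun_apply L w))" by simp
      also have "\<dots> \<le> h^2/2 * (KL * (h/2 * (KL * (2*B))))"
      proof (rule mult_left_mono)
        have "norm (blinfun_apply L ((h/2) *\<^sub>R blinfun_apply L w)) \<le> KL * norm ((h/2) *\<^sub>R blinfun_apply L w)"
          unfolding KL_def by (rule norm_blinfun)
        also have "\<dots> \<le> KL * (h/2 * (KL * (2*B)))" by (rule mult_left_mono[OF nLw KL0])
        finally show "norm (blinfun_apply L ((h/2) *\<^sub>R blinfun_apply L w)) \<le> KL * (h/2 * (KL * (2*B)))" .
      qed simp
      finally show ?thesis by (simp add: power2_eq_square power3_eq_cube algebra_simps)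
    qed
    have b2: "norm ?X2 \<le> (M1*KL*B/2) * h^3"
    proof -
      have "norm ?X2 = h^2/2 * norm (blinfun_apply (N' un) ((h/2) *\<^sub>R blinfun_apply L w))" by simp
      also have "\<dots> \<le> h^2/2 * (M1 * (h/2 * (KL * (2*B))))"
      proof (rule mult_left_mono)
        have "norm (blinfun_apply (N' un) ((h/2) *\<^sub>R blinfun_apply L w)) \<le> norm (N' un) * norm ((h/2) *\<^sub>R blinfun_apply L w)"
          by (rule norm_blinfun)
        also have "\<dots> \<le> M1 * (h/2 * (KL * (2*B)))" by (rule mult_mono[OF N'un nLw M10 norm_ge_zero])
        finally show "norm (blinfun_apply (N' un) ((h/2) *\<^sub>R blinfun_apply L w)) \<le> M1 * (h/2 * (KL * (2*B)))" .
      qed simp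
      finally show ?thesis by (simp add: power2_eq_square power3_eq_cube algebra_simps)
    qed
    have b3: "norm ?X3 \<le> (M2*B^2) * h^3"
    proof -
      have "norm ?X3 = h * norm (D - blinfun_apply (N' un) ((h/2) *\<^sub>R w))" using h by simp
      also have "\<dots> \<le> h * (M2 * (h*B)^2)" using E1 h by (intro mult_left_mono) auto
      finally show ?thesis by (simp add: power2_eq_square power3_eq_cube algebra_simps)
    qed
    have b4: "norm ?X4 \<le> (2*KA*exp KA*M1*B) * h^3"
    proof -
      have "norm ?X4 = 2*h * norm (P - (1/2) *\<^sub>R D)" using h by simp
      also have "\<dots> \<le> 2*h * ((h * KA) * exp KA * (M1 * (h*B)))" using E2 h by (intro mult_left_mono) auto
      finally show ?thesis by (simp add: power2_eq_square power3_eq_cube algebra_simps)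
    qed
    have "norm (himexp2_step L N A h un - u (t+h)) \<le> norm ?X1 + norm ?X2 + norm ?X3 + norm ?X4 + norm ?X5"
      unfolding idt by (intro order_trans[OF norm_triangle_ineq4] add_mono order_trans[OF norm_triangle_ineq] order_refl)
    also have "\<dots> \<le> (KL^2*B/2) * h^3 + (M1*KL*B/2) * h^3 + (M2*B^2) * h^3 + (2*KA*exp KA*M1*B) * h^3 + B * h^3"
      using b1 b2 b3 b4 E3 by linarith
    also have "\<dots> = C * h^3" unfolding C_def by (simp add: algebra_simps)
    finally show ?thesis unfolding un_def .
  qed
  show ?thesis
  proof (intro exI conjI allI impI)
    show "0 < h0" by (rule h00)
    fix h :: real and n :: nat
    assume h: "0 < h" "h \<le> h0" and tn: "t0 + real (Suc n) * h \<le> T"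
    define t where "t = t0 + real n * h"
    have tt: "t0 + real (Suc n) * h = t + h" unfolding t_def by (simp add: algebra_simps)
    have t0t: "t0 \<le> t" unfolding t_def using h by simp
    have th: "t + h \<le> T" using tn tt by simp
    have tI: "t \<in> {t0..T}" using t0t th h by auto
    have utK: "u t \<in> K" using inK[OF tI, of "u t"] \<delta> by simp
    have n1: "norm (N' (u t)) \<le> M1" using M1 utK by blast
    have kJ: "norm ((\<lambda>v. L + N' v) (u t)) \<le> KA"
      unfolding KA_def KL_def using n1 norm_triangle_ineq[of L "N' (u t)"] by simp
    have kN: "norm (N' (u t)) \<le> KA" unfolding KA_def using n1 KL0 by simp
    show "norm (himexp2J_step L N N' h (u (t0 + real n * h)) - u (t0 + real (Suc n) * h)) \<le> C * h ^ 3"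
      unfolding himexp2J_step_def tt t_def[symmetric] by (rule key[where A="\<lambda>v. L + N' v", OF kJ h t0t th])
    show "norm (himexp2N_step L N N' h (u (t0 + real n * h)) - u (t0 + real (Suc n) * h)) \<le> C * h ^ 3"
      unfolding himexp2N_step_def tt t_def[symmetric] by (rule key[where A="N'", OF kN h t0t th])
  qed
qed

end
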